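(* Let $(\hat p_n)_{n\ge0}$ be the monic orthogonal polynomials with respect to a positive Borel measure on $\mathbb{R}$ with infinitely many points in its support. Then there exist sequences of positive numbers $(\rho_n)_{n\ge0}$ such that the normalized polynomials $p_n(x)=\rho_n\hat p_n(x)$ satisfy: for any positive integer $K$ and any real numbers $\gamma_0,\dots,\gamma_K$ with $\gamma_0=1$ and $\gamma_K\neq0$, the polynomials $$q_n(x)=\sum_{j=0}^K\gamma_jp_{n-j}(x)$$ have only real zeros for all $n$ sufficiently large (how large depending only on $K$ and $\gamma_0,\dots,\gamma_K$). *)

theory Defs
  imports "HOL-Analysis.Analysis" "HOL-Computational_Algebra.Polynomial"
begin

definition measure_support :: "real measure \<Rightarrow> real set" where
  "measure_support M = {x. \<forall>e>0. emeasure M (ball x e) > 0}"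

definition finite_moments :: "real measure \<Rightarrow> bool" where
  "finite_moments M \<longleftrightarrow> (\<forall>k::nat. integrable M (\<lambda>x. x ^ k))"

definition monic_orthogonal_polys :: "real measure \<Rightarrow> (nat \<Rightarrow> real poly) \<Rightarrow> bool" where
  "monic_orthogonal_polys M p \<longleftrightarrow>
     (\<forall>n. degree (p n) = n \<and> lead_coeff (p n) = 1) \<and>
     (\<forall>m n. m \<noteq> n \<longrightarrow> (\<integral>x. poly (p m) x * poly (p n) x \<partial>M) = 0)"

definition only_real_zeros :: "real poly \<Rightarrow> bool" where
  "only_real_zeros q \<longleftrightarrow> (\<forall>z::complex. poly (map_poly complex_of_real q) z = 0 \<longrightarrow> z \<in> \<real>)"

end

theory Submission
  imports Defs
begin

lemma only_real_from_roots:
  fixes q :: "real poly"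
  assumes q0: "q \<noteq> 0" and dq: "degree q \<le> n" and RS: "R \<subseteq> {x. poly q x = 0}"
    and cR: "card R \<ge> n" and fR: "finite R"
  shows "only_real_zeros q"
  unfolding only_real_zeros_def
proof (intro allI impI, rule ccontr)
  fix z :: complex
  assume z: "poly (map_poly complex_of_real q) z = 0" and nz: "z \<notin> \<real>"
  define Q where "Q = map_poly complex_of_real q"
  have Q0: "Q \<noteq> 0" using q0 unfolding Q_def by (subst map_poly_eq_0_iff) auto
  have dQ: "degree Q = degree q" unfolding Q_def by (rule degree_map_poly) auto
  have pQ: "poly Q (of_real x) = of_real (poly q x)" for x
    unfolding Q_def by (induction q) (auto simp: map_poly_pCons)
  have "insert z (complex_of_real ` R) \<subseteq> {x. poly Q x = 0}"
    using z RS pQ unfolding Q_def by auto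
  hence "card (insert z (complex_of_real ` R)) \<le> card {x. poly Q x = 0}"
    using poly_roots_finite[OF Q0] by (intro card_mono) auto
  also have "\<dots> \<le> degree Q" by (rule card_poly_roots_bound[OF Q0])
  finally have "card (insert z (complex_of_real ` R)) \<le> n" using dQ dq by simp
  moreover have "z \<notin> complex_of_real ` R" using nz by auto
  moreover have "card (complex_of_real ` R) = card R"
    by (rule card_image) (auto simp: inj_on_def)
  ultimately show False using fR cR by simp
qed

lemma poly_integrable:
  fixes M :: "real measure" and p :: "real poly"
  assumes "finite_moments M"
  shows "integrable M (\<lambda>x. poly p x)"
proof -
  have "integrable M (\<lambda>x. \<Sum>i\<le>degree p. coeff p i * x ^ i)"
    using assms unfolding finite_moments_def by (intro Bochner_Integration.integrable_sum Bochner_Integration.integrable_mult_right) blast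
  thus ?thesis by (simp add: poly_altdef)
qed
lemma fm_finite_emeasure:
  assumes "finite_moments M"
  shows "emeasure M (space M) < \<infinity>"
proof -
  have "integrable M (\<lambda>x. (x::real) ^ 0)" using assms unfolding finite_moments_def by blast
  hence "integrable M (\<lambda>x. 1::real)" by simp
  thus ?thesis
    by (simp add: integrable_iff_bounded)
qed

lemma poly_pos_integral:
  fixes f :: "real poly"
  assumes sM: "sets M = sets borel" and fm: "finite_moments M"
    and inf: "infinite (measure_support M)"
    and f0: "f \<noteq> 0" and nn: "\<And>x. poly f x \<ge> 0"
  shows "(\<integral>x. poly f x \<partial>M) > 0"
proof -
  have spM: "space M = UNIV" using sets_eq_imp_space_eq[OF sM] by simp
  have "\<not> measure_support M \<subseteq> {x. poly f x = 0}"
    using inf poly_roots_finite[OF f0] finite_subset by blast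
  then obtain x where xs: "x \<in> measure_support M" and fx: "poly f x \<noteq> 0" by blast
  have fxp: "poly f x > 0" using nn[of x] fx by linarith
  have "isCont (poly f) x" by simp
  hence "\<forall>r>0. \<exists>s>0. \<forall>y. y \<noteq> x \<and> norm (y - x) < s \<longrightarrow> norm (poly f y - poly f x) < r"
    unfolding isCont_def LIM_eq by blast
  then obtain e where e: "e > 0" and he: "\<And>y. y \<noteq> x \<Longrightarrow> norm (y - x) < e \<Longrightarrow> norm (poly f y - poly f x) < poly f x / 2"
    using fxp by (meson half_gt_zero)
  have hb: "poly f y \<ge> poly f x / 2" if "y \<in> ball x e" for y
  proof (cases "y = x")
    case True thus ?thesis using fxp by simp
  next
    case False
    have "\<bar>y - x\<bar> < e" using that by (simp add: dist_real_def abs_minus_commute)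
    hence "\<bar>poly f y - poly f x\<bar> < poly f x / 2" using he[of y] False by simp
    thus ?thesis by linarith
  qed
  have em: "emeasure M (ball x e) > 0" using xs e unfolding measure_support_def by auto
  have bs: "ball x e \<in> sets M" using sM by simp
  have fin: "emeasure M (ball x e) < \<infinity>"
    using fm_finite_emeasure[OF fm] emeasure_space[of M "ball x e"] by (metis order.strict_trans1)
  have mpos: "measure M (ball x e) > 0"
    using em fin by (simp add: measure_def enn2real_positive_iff)
  have "(\<integral>y. poly f x / 2 * indicator (ball x e) y \<partial>M) \<le> (\<integral>y. poly f y \<partial>M)"
  proof (rule integral_mono')
    show "integrable M (\<lambda>y. poly f y)" by (rule poly_integrable[OF fm])
    show "poly f x / 2 * indicator (ball x e) y \<le> poly f y" for y
      using hb[of y] nn[of y] by (cases "y \<in> ball x e") auto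
    show "0 \<le> poly f y" for y by (rule nn)
  qed
  moreover have "(\<integral>y. poly f x / 2 * indicator (ball x e) y \<partial>M) = poly f x / 2 * measure M (ball x e)"
    using spM by simp
  moreover have "poly f x / 2 * measure M (ball x e) > 0" using fxp mpos by simp
  ultimately show ?thesis by linarith
qed

lemma no_root_const_sign:
  fixes f :: "real poly"
  assumes "\<And>x. poly f x \<noteq> 0"
  shows "(\<forall>x. poly f x \<ge> 0) \<or> (\<forall>x. poly f x \<le> 0)"
proof (rule ccontr)
  assume "\<not> ?thesis"
  then obtain a b where a: "poly f a < 0" and b: "poly f b > 0" by (meson not_le)
  have "a \<noteq> b" using a b by auto
  then consider "a < b" | "b < a" by linarith
  thus False
  proof cases
    case 1 then show False using poly_IVT_pos[OF 1 a b] assms by blast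
  next
    case 2 then show False using poly_IVT_neg[OF 2 b a] assms by blast
  qed
qed

lemma sign_lemma:
  fixes f :: "real poly"
  assumes "f \<noteq> 0"
  shows "\<exists>S. finite S \<and> S \<subseteq> {x. poly f x = 0} \<and>
     ((\<forall>x. poly f x * (\<Prod>s\<in>S. x - s) \<ge> 0) \<or> (\<forall>x. poly f x * (\<Prod>s\<in>S. x - s) \<le> 0))"
  using assms
proof (induction "degree f" arbitrary: f rule: less_induct)
  case less
  show ?case
  proof (cases "\<exists>r. poly f r = 0")
    case False
    hence "(\<forall>x. poly f x \<ge> 0) \<or> (\<forall>x. poly f x \<le> 0)" using no_root_const_sign by blast
    thus ?thesis by (intro exI[of _ "{}"]) auto
  next
    case True
    then obtain r where r: "poly f r = 0" by blast
    then obtain f1 where f1: "f = [:-r, 1:] * f1" using poly_eq_0_iff_dvd by (metis dvdE)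
    have f10: "f1 \<noteq> 0" using less.prems f1 by auto
    have "degree f = degree [:-r, 1:] + degree f1" unfolding f1 using f10 by (intro degree_mult_eq) auto
    hence "degree f1 < degree f" by simp
    from less.hyps[OF this f10] obtain S1 where S1: "finite S1" "S1 \<subseteq> {x. poly f1 x = 0}"
      and sg: "(\<forall>x. poly f1 x * (\<Prod>s\<in>S1. x - s) \<ge> 0) \<or> (\<forall>x. poly f1 x * (\<Prod>s\<in>S1. x - s) \<le> 0)"
      by blast
    have pf: "poly f x = (x - r) * poly f1 x" for x unfolding f1 by (simp add: algebra_simps)
    have rts: "{x. poly f1 x = 0} \<subseteq> {x. poly f x = 0}" using pf by auto
    show ?thesis
    proof (cases "r \<in> S1")
      case True
      have "poly f x * (\<Prod>s\<in>S1 - {r}. x - s) = poly f1 x * (\<Prod>s\<in>S1. x - s)" for x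
        using prod.remove[OF S1(1) True, of "\<lambda>s. x - s"] pf by simp
      thus ?thesis using sg S1 rts
        by (intro exI[of _ "S1 - {r}"]) auto
    next
      case False
      have eq: "poly f x * (\<Prod>s\<in>insert r S1. x - s) = (x - r)^2 * (poly f1 x * (\<Prod>s\<in>S1. x - s))" for x
        using False S1(1) pf by (simp add: power2_eq_square)
      have "(\<forall>x. poly f x * (\<Prod>s\<in>insert r S1. x - s) \<ge> 0) \<or> (\<forall>x. poly f x * (\<Prod>s\<in>insert r S1. x - s) \<le> 0)"
        using sg unfolding eq by (meson mult_nonneg_nonneg mult_nonneg_nonpos zero_le_power2)
      thus ?thesis using S1 rts r by (intro exI[of _ "insert r S1"]) auto
    qed
  qed
qed

lemma eps_exists:
  fixes D :: "real set"
  assumes "finite D" "\<forall>d\<in>D. d > 0"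
  shows "\<exists>e>0. \<forall>d\<in>D. 2 * e < d"
proof (cases "D = {}")
  case True thus ?thesis by (intro exI[of _ 1]) auto
next
  case False
  have "Min D > 0" using assms False by simp
  moreover have "\<forall>d\<in>D. Min D \<le> d" using assms by simp
  ultimately show ?thesis by (intro exI[of _ "Min D / 3"]) force
qed

lemma orth_lower:
  fixes M :: "real measure"
  assumes fm: "finite_moments M" and mop: "monic_orthogonal_polys M phat"
  shows "degree f < n \<Longrightarrow> (\<integral>x. poly (phat n) x * poly f x \<partial>M) = 0"
proof (induction "degree f" arbitrary: f rule: less_induct)
  case less
  show ?case
  proof (cases "f = 0")
    case True thus ?thesis by simp
  next
    case False
    define d where "d = degree f"
    define c where "c = lead_coeff f"
    define r where "r = f - smult c (phat d)"
    have dd: "degree (phat d) = d" and "lead_coeff (phat d) = 1"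
      using mop unfolding monic_orthogonal_polys_def by blast+
    hence ld: "coeff (phat d) d = 1" by simp
    have orth: "(\<integral>x. poly (phat n) x * poly (phat d) x \<partial>M) = 0"
      using mop less.prems unfolding monic_orthogonal_polys_def d_def by auto
    have fe: "f = smult c (phat d) + r" unfolding r_def by simp
    have rint: "(\<integral>x. poly (phat n) x * poly r x \<partial>M) = 0"
    proof (cases "r = 0")
      case True thus ?thesis by simp
    next
      case False
      have "degree (smult c (phat d)) \<le> d" using degree_smult_le[of c "phat d"] dd by simp
      hence "degree r \<le> d" unfolding r_def by (intro degree_diff_le) (auto simp: d_def)
      have "coeff r d = coeff f d - c * coeff (phat d) d" unfolding r_def by simp
      also have "\<dots> = 0" using ld unfolding c_def d_def by simp
      finally have "coeff r d = 0" .
      hence "degree r \<noteq> d" using False leading_coeff_0_iff by metis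
      hence "degree r < degree f" using \<open>degree r \<le> d\<close> d_def by simp
      hence "degree r < degree f" "degree r < n" using less.prems by auto
      thus ?thesis by (rule less.hyps)
    qed
    have "(\<integral>x. poly (phat n) x * poly f x \<partial>M)
        = (\<integral>x. c * (poly (phat n) x * poly (phat d) x) + poly (phat n) x * poly r x \<partial>M)"
      by (subst fe) (simp add: algebra_simps)
    also have "\<dots> = c * (\<integral>x. poly (phat n) x * poly (phat d) x \<partial>M) + (\<integral>x. poly (phat n) x * poly r x \<partial>M)"
    proof -
      have i1: "integrable M (\<lambda>x. poly (phat n) x * poly (phat d) x)"
        using poly_integrable[OF fm, of "phat n * phat d"] by simp
      have i2: "integrable M (\<lambda>x. poly (phat n) x * poly r x)"
        using poly_integrable[OF fm, of "phat n * r"] by simp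
      show ?thesis using i1 i2 by simp
    qed
    also have "\<dots> = 0" using orth rint by simp
    finally show ?thesis .
  qed
qed

lemma sign_change_at_simple:
  fixes g :: "real poly"
  assumes g0: "g \<noteq> 0" and SR: "S = {x. poly g x = 0}" and cS: "card S = degree g"
    and sS: "s \<in> S" and e: "e > 0" and sep: "\<forall>t\<in>S. t \<noteq> s \<longrightarrow> e < \<bar>s - t\<bar>"
  shows "poly g (s - e) * poly g (s + e) < 0"
proof -
  have "poly g s = 0" using sS SR by simp
  then obtain R where gR: "g = [:-s, 1:] * R" using poly_eq_0_iff_dvd by (metis dvdE)
  have R0: "R \<noteq> 0" using g0 gR by auto
  have "degree g = degree [:-s, 1:] + degree R" unfolding gR using R0 by (intro degree_mult_eq) auto
  hence dg: "degree g = Suc (degree R)" by simp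
  have pg: "poly g x = (x - s) * poly R x" for x unfolding gR by (simp add: algebra_simps)
  have fS: "finite S" using SR poly_roots_finite[OF g0] by simp
  have Rs: "poly R s \<noteq> 0"
  proof
    assume Rs0: "poly R s = 0"
    have "S \<subseteq> {x. poly R x = 0}"
    proof
      fix y assume "y \<in> S"
      then show "y \<in> {x. poly R x = 0}" using Rs0 SR pg by (cases "y = s") auto
    qed
    hence "card S \<le> card {x. poly R x = 0}" using poly_roots_finite[OF R0] by (rule card_mono[rotated])
    also have "\<dots> \<le> degree R" by (rule card_poly_roots_bound[OF R0])
    finally show False using cS dg by simp
  qed
  have Rnz: "poly R y \<noteq> 0" if "\<bar>y - s\<bar> \<le> e" for y
  proof
    assume "poly R y = 0"
    hence "y \<in> S" using SR pg by simp
    moreover have "y \<noteq> s" using Rs \<open>poly R y = 0\<close> by auto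
    ultimately show False using sep that by (auto simp: abs_minus_commute)
  qed
  have n1: "poly R (s - e) \<noteq> 0" and n2: "poly R (s + e) \<noteq> 0" using Rnz e by auto
  have "\<not> poly R (s - e) * poly R (s + e) < 0"
  proof
    assume "poly R (s - e) * poly R (s + e) < 0"
    from poly_IVT[OF _ this] e obtain x where "s - e < x" "x < s + e" "poly R x = 0" by auto
    thus False using Rnz[of x] by auto
  qed
  hence pos: "poly R (s - e) * poly R (s + e) > 0" using n1 n2
    by (metis linorder_neqE_linordered_idom mult_eq_0_iff)
  have "poly g (s - e) * poly g (s + e) = - (e * e) * (poly R (s - e) * poly R (s + e))"
    unfolding pg[of "s - e"] pg[of "s + e"] by (simp add: algebra_simps)
  also have "\<dots> < 0" using pos e by (simp add: mult_pos_pos)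
  finally show ?thesis .
qed

lemma good_n:
  fixes M :: "real measure"
  assumes sM: "sets M = sets borel" and fm: "finite_moments M"
    and inf: "infinite (measure_support M)" and mop: "monic_orthogonal_polys M phat"
  shows "\<exists>S e. finite S \<and> card S = n \<and> e > 0 \<and>
     (\<forall>s\<in>S. poly (phat n) (s - e) * poly (phat n) (s + e) < 0) \<and>
     (\<forall>s\<in>S. \<forall>t\<in>S. s \<noteq> t \<longrightarrow> 2 * e < \<bar>s - t\<bar>)"
proof -
  define g where "g = phat n"
  have dg: "degree g = n" and lg: "lead_coeff g = 1"
    using mop unfolding monic_orthogonal_polys_def g_def by blast+
  have g0: "g \<noteq> 0" using lg by auto
  obtain S where fS: "finite S" and Sr: "S \<subseteq> {x. poly g x = 0}"
    and sg: "(\<forall>x. poly g x * (\<Prod>s\<in>S. x - s) \<ge> 0) \<or> (\<forall>x. poly g x * (\<Prod>s\<in>S. x - s) \<le> 0)"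
    using sign_lemma[OF g0] by blast
  have fr: "finite {x. poly g x = 0}" by (rule poly_roots_finite[OF g0])
  have crn: "card {x. poly g x = 0} \<le> n" using card_poly_roots_bound[OF g0] dg by simp
  have cge: "card S \<ge> n"
  proof (rule ccontr)
    assume "\<not> card S \<ge> n"
    hence lt: "card S < n" by simp
    define h where "h = (\<Prod>s\<in>S. [:-s, 1:])"
    have h0: "h \<noteq> 0" unfolding h_def using fS by (simp add: prod_zero_iff)
    have "degree h = (\<Sum>s\<in>S. degree [:-s, 1:])" unfolding h_def
      by (rule degree_prod_eq_sum_degree) auto
    hence "degree h = card S" by simp
    hence I0: "(\<integral>x. poly g x * poly h x \<partial>M) = 0"
      using orth_lower[OF fm mop, of h n] lt g_def by simp
    have ph: "poly h x = (\<Prod>s\<in>S. x - s)" for x unfolding h_def by (simp add: poly_prod)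
    have gh0: "g * h \<noteq> 0" using g0 h0 by simp
    show False using sg
    proof
      assume "\<forall>x. poly g x * (\<Prod>s\<in>S. x - s) \<ge> 0"
      hence "\<And>x. poly (g * h) x \<ge> 0" using ph by simp
      from poly_pos_integral[OF sM fm inf gh0 this] I0 show False by simp
    next
      assume "\<forall>x. poly g x * (\<Prod>s\<in>S. x - s) \<le> 0"
      hence "\<And>x. poly (- (g * h)) x \<ge> 0" using ph by simp
      from poly_pos_integral[OF sM fm inf _ this] gh0 I0 show False by simp
    qed
  qed
  have cS: "card S = n" using cge card_mono[OF fr Sr] crn by simp
  have SR: "S = {x. poly g x = 0}" using card_subset_eq[OF fr Sr] cS crn card_mono[OF fr Sr]
    by simp
  define D where "D = (\<lambda>(s, t). \<bar>s - t\<bar>) ` {(s, t). s \<in> S \<and> t \<in> S \<and> s \<noteq> t}"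
  have "finite D" unfolding D_def
    by (rule finite_imageI, rule finite_subset[of _ "S \<times> S"]) (use fS in auto)
  moreover have "\<forall>d\<in>D. d > 0" unfolding D_def by auto
  ultimately obtain e where e: "e > 0" and eD: "\<forall>d\<in>D. 2 * e < d" using eps_exists by blast
  have sep: "\<forall>s\<in>S. \<forall>t\<in>S. s \<noteq> t \<longrightarrow> 2 * e < \<bar>s - t\<bar>"
  proof (intro ballI impI)
    fix s t assume "s \<in> S" "t \<in> S" "s \<noteq> t"
    hence "\<bar>s - t\<bar> \<in> D" unfolding D_def by (auto intro!: image_eqI[of _ _ "(s, t)"])
    thus "2 * e < \<bar>s - t\<bar>" using eD by blast
  qed
  have "\<forall>s\<in>S. poly g (s - e) * poly g (s + e) < 0"
  proof
    fix s assume s: "s \<in> S"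
    have "\<forall>t\<in>S. t \<noteq> s \<longrightarrow> e < \<bar>s - t\<bar>" using sep s e by force
    thus "poly g (s - e) * poly g (s + e) < 0"
      using sign_change_at_simple[OF g0 SR _ s e] cS dg by simp
  qed
  thus ?thesis using fS cS e sep unfolding g_def by blast
qed

fun rhof :: "(nat \<Rightarrow> real) \<Rightarrow> (nat \<Rightarrow> real) \<Rightarrow> nat \<Rightarrow> real" where
  "rhof B D 0 = 1"
| "rhof B D (Suc n) = rhof B D n * (real n + 2) * (B (Suc n) + 1) * (D (Suc n) + 1)"

lemma rhof_pos:
  assumes "\<And>n. B n \<ge> 0" "\<And>n. D n \<ge> 0"
  shows "rhof B D n > 0"
proof (induction n)
  case 0 show ?case by simp
next
  case (Suc n)
  have "B (Suc n) + 1 > 0" "D (Suc n) + 1 > 0" using assms[of "Suc n"] by linarith+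
  thus ?case using Suc by simp
qed

lemma rhof_mono:
  assumes "\<And>n. B n \<ge> 0" "\<And>n. D n \<ge> 0" and "m \<le> n"
  shows "rhof B D m \<le> rhof B D n"
proof -
  have "incseq (rhof B D)"
  proof (rule incseq_SucI)
    fix n
    have p: "rhof B D n > 0" by (rule rhof_pos[OF assms(1,2)])
    have "1 \<le> (real n + 2) * (B (Suc n) + 1) * (D (Suc n) + 1)"
    proof -
      have "1 \<le> real n + 2" by simp
      moreover have "1 \<le> B (Suc n) + 1" "1 \<le> D (Suc n) + 1" using assms(1,2)[of "Suc n"] by simp_all
      ultimately have "1 * 1 \<le> (real n + 2) * (B (Suc n) + 1)" by (intro mult_mono) auto
      hence "1 * 1 \<le> ((real n + 2) * (B (Suc n) + 1)) * (D (Suc n) + 1)"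
        using \<open>1 \<le> D (Suc n) + 1\<close> by (intro mult_mono) auto
      thus ?thesis by simp
    qed
    hence "rhof B D n * 1 \<le> rhof B D n * ((real n + 2) * (B (Suc n) + 1) * (D (Suc n) + 1))"
      using p by (intro mult_left_mono) auto
    thus "rhof B D n \<le> rhof B D (Suc n)" by (simp add: mult.assoc)
  qed
  thus ?thesis using assms(3) by (simp add: incseq_def)
qed

lemma dominate_sign:
  fixes a g E :: real
  assumes "\<bar>E\<bar> < a * \<bar>g\<bar>" "a > 0"
  shows "(a * g + E) * g > 0"
proof (cases "g > 0")
  case True
  hence "a * g + E > 0" using assms by auto
  thus ?thesis using True by simp
next
  case False
  hence "g < 0" using assms by (cases "g = 0") auto
  hence "a * g + E < 0" using assms by auto
  thus ?thesis using \<open>g < 0\<close> by (simp add: mult_neg_neg)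
qed

lemma sign_transfer:
  fixes q1 q2 g1 g2 :: real
  assumes "q1 * g1 > 0" "q2 * g2 > 0" "g1 * g2 < 0"
  shows "q1 * q2 < 0"
proof -
  have "(q1 * g1) * (q2 * g2) > 0" using assms by simp
  hence "(q1 * q2) * (g1 * g2) > 0" by (simp add: algebra_simps)
  thus ?thesis using assms(3) by (simp add: zero_less_mult_iff mult_less_0_iff) linarith
qed

theorem mainTheorem3:
  fixes M :: "real measure" and phat :: "nat \<Rightarrow> real poly"
  assumes "sets M = sets borel"
    and "finite_moments M"
    and "infinite (measure_support M)"
    and "monic_orthogonal_polys M phat"
  shows "\<exists>\<rho> :: nat \<Rightarrow> real. (\<forall>n. \<rho> n > 0) \<and>
    (\<forall>(K::nat) (\<gamma>::nat \<Rightarrow> real). K > 0 \<and> \<gamma> 0 = 1 \<and> \<gamma> K \<noteq> 0 \<longrightarrow>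
       (\<exists>N. \<forall>n\<ge>N. only_real_zeros
          (\<Sum>j\<le>K. smult (\<gamma> j) (smult (\<rho> (n - j)) (phat (n - j))))))"
proof -
  have mop: "monic_orthogonal_polys M phat" by fact
  have "\<forall>n. \<exists>S. \<exists>e. finite S \<and> card S = n \<and> e > 0 \<and>
     (\<forall>s\<in>S. poly (phat n) (s - e) * poly (phat n) (s + e) < 0) \<and>
     (\<forall>s\<in>S. \<forall>t\<in>S. s \<noteq> t \<longrightarrow> 2 * e < \<bar>s - t\<bar>)"
    using good_n[OF assms] by blast
  then obtain SS where "\<forall>n. \<exists>e. finite (SS n) \<and> card (SS n) = n \<and> e > 0 \<and>
     (\<forall>s\<in>SS n. poly (phat n) (s - e) * poly (phat n) (s + e) < 0) \<and>
     (\<forall>s\<in>SS n. \<forall>t\<in>SS n. s \<noteq> t \<longrightarrow> 2 * e < \<bar>s - t\<bar>)"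
    by (rule choice_iff[THEN iffD1, elim_format]) blast
  then obtain ee where H: "\<And>n. finite (SS n) \<and> card (SS n) = n \<and> ee n > 0 \<and>
     (\<forall>s\<in>SS n. poly (phat n) (s - ee n) * poly (phat n) (s + ee n) < 0) \<and>
     (\<forall>s\<in>SS n. \<forall>t\<in>SS n. s \<noteq> t \<longrightarrow> 2 * ee n < \<bar>s - t\<bar>)"
    by (rule choice_iff[THEN iffD1, elim_format]) blast
  have fS: "finite (SS n)" and cS: "card (SS n) = n" and eP: "ee n > 0"
    and chg: "\<And>s. s \<in> SS n \<Longrightarrow> poly (phat n) (s - ee n) * poly (phat n) (s + ee n) < 0"
    and sep: "\<And>s t. s \<in> SS n \<Longrightarrow> t \<in> SS n \<Longrightarrow> s \<noteq> t \<Longrightarrow> 2 * ee n < \<bar>s - t\<bar>" for n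
    using H[of n] by blast+
  define Y where "Y n = (\<lambda>s. s - ee n) ` SS n \<union> (\<lambda>s. s + ee n) ` SS n" for n
  have fY: "finite (Y n)" for n unfolding Y_def using fS by simp
  have Ynz: "poly (phat n) y \<noteq> 0" if "y \<in> Y n" for n y
    using that chg[of _ n] unfolding Y_def by force
  define B where "B n = (\<Sum>y\<in>Y n. \<Sum>j\<le>n. \<bar>poly (phat j) y\<bar>)" for n
  define D where "D n = (\<Sum>y\<in>Y n. 1 / \<bar>poly (phat n) y\<bar>)" for n
  have B0: "B n \<ge> 0" for n unfolding B_def by (intro sum_nonneg) auto
  have D0: "D n \<ge> 0" for n unfolding D_def by (intro sum_nonneg) auto
  define \<rho> where "\<rho> = rhof B D"
  have \<rho>pos: "\<rho> n > 0" for n unfolding \<rho>_def by (rule rhof_pos[OF B0 D0])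
  have \<rho>mono: "m \<le> n \<Longrightarrow> \<rho> m \<le> \<rho> n" for m n unfolding \<rho>_def by (rule rhof_mono[OF B0 D0])
  have Bb: "\<bar>poly (phat j) y\<bar> \<le> B n" if "y \<in> Y n" "j \<le> n" for n j y
  proof -
    have "\<bar>poly (phat j) y\<bar> \<le> (\<Sum>j\<le>n. \<bar>poly (phat j) y\<bar>)"
      using that by (intro member_le_sum) auto
    also have "\<dots> \<le> B n" unfolding B_def using that fY
      by (intro member_le_sum[where f="\<lambda>y. \<Sum>j\<le>n. \<bar>poly (phat j) y\<bar>"]) (auto intro: sum_nonneg)
    finally show ?thesis .
  qed
  have Db: "(D n + 1) * \<bar>poly (phat n) y\<bar> \<ge> 1" if "y \<in> Y n" for n y
  proof -
    have gp: "\<bar>poly (phat n) y\<bar> > 0" using Ynz[OF that] by simp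
    have "1 / \<bar>poly (phat n) y\<bar> \<le> D n" unfolding D_def using that fY
      by (intro member_le_sum[where f="\<lambda>y. 1 / \<bar>poly (phat n) y\<bar>"]) auto
    hence "1 \<le> D n * \<bar>poly (phat n) y\<bar>" using gp by (simp add: divide_le_eq)
    thus ?thesis using gp by (simp add: algebra_simps)
  qed
  have key: "\<rho> (Suc m) * \<bar>poly (phat (Suc m)) y\<bar> \<ge> \<rho> m * (real m + 2) * (B (Suc m) + 1)"
    if "y \<in> Y (Suc m)" for m y
  proof -
    have "\<rho> (Suc m) * \<bar>poly (phat (Suc m)) y\<bar>
        = (\<rho> m * (real m + 2) * (B (Suc m) + 1)) * ((D (Suc m) + 1) * \<bar>poly (phat (Suc m)) y\<bar>)"
      unfolding \<rho>_def by (simp add: algebra_simps)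
    also have "\<dots> \<ge> (\<rho> m * (real m + 2) * (B (Suc m) + 1)) * 1"
      using Db[OF that] \<rho>pos[of m] B0[of "Suc m"]
      by (intro mult_left_mono) auto
    finally show ?thesis by simp
  qed
  show ?thesis
  proof (intro exI[of _ \<rho>] conjI allI impI)
    show "\<rho> n > 0" for n by (rule \<rho>pos)
    fix K :: nat and \<gamma> :: "nat \<Rightarrow> real"
    assume KG: "0 < K \<and> \<gamma> 0 = 1 \<and> \<gamma> K \<noteq> 0"
    define G where "G = (\<Sum>j=1..K. \<bar>\<gamma> j\<bar>)"
    have G0: "G \<ge> 0" unfolding G_def by (intro sum_nonneg) auto
    show "\<exists>N. \<forall>n\<ge>N. only_real_zeros (\<Sum>j\<le>K. smult (\<gamma> j) (smult (\<rho> (n - j)) (phat (n - j))))"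
    proof (intro exI[of _ "K + nat \<lceil>G\<rceil>"] allI impI)
      fix n assume nN: "K + nat \<lceil>G\<rceil> \<le> n"
      define q where "q = (\<Sum>j\<le>K. smult (\<gamma> j) (smult (\<rho> (n - j)) (phat (n - j))))"
      have nK: "K \<le> n" and n1: "n \<ge> 1" using nN KG by auto
      obtain m where nm: "n = Suc m" using n1 by (cases n) auto
      have Gn: "G < real n + 1" using nN by linarith
      have pq: "poly q y = \<rho> n * poly (phat n) y + (\<Sum>j=1..K. \<gamma> j * (\<rho> (n - j) * poly (phat (n - j)) y))" for y
      proof -
        have "poly q y = (\<Sum>j\<le>K. \<gamma> j * (\<rho> (n - j) * poly (phat (n - j)) y))"
          unfolding q_def by (simp add: poly_sum mult.assoc)
        also have "\<dots> = (\<Sum>j=0..K. \<gamma> j * (\<rho> (n - j) * poly (phat (n - j)) y))"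
          by (simp add: atMost_atLeast0)
        also have "\<dots> = \<gamma> 0 * (\<rho> (n - 0) * poly (phat (n - 0)) y) + (\<Sum>j=Suc 0..K. \<gamma> j * (\<rho> (n - j) * poly (phat (n - j)) y))"
          by (rule sum.atLeast_Suc_atMost) simp
        finally show ?thesis using KG by simp
      qed
      have qg: "poly q y * poly (phat n) y > 0" if y: "y \<in> Y n" for y
      proof -
        define E where "E = (\<Sum>j=1..K. \<gamma> j * (\<rho> (n - j) * poly (phat (n - j)) y))"
        have "\<bar>E\<bar> \<le> (\<Sum>j=1..K. \<bar>\<gamma> j * (\<rho> (n - j) * poly (phat (n - j)) y)\<bar>)"
          unfolding E_def by (rule sum_abs)
        also have "\<dots> \<le> (\<Sum>j=1..K. \<bar>\<gamma> j\<bar> * (\<rho> m * B n))"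
        proof (rule sum_mono)
          fix j assume j: "j \<in> {1..K}"
          have r1: "\<rho> (n - j) \<le> \<rho> m" using j nm by (intro \<rho>mono) auto
          have b1: "\<bar>poly (phat (n - j)) y\<bar> \<le> B n" using Bb[OF y] by simp
          have "\<rho> (n - j) * \<bar>poly (phat (n - j)) y\<bar> \<le> \<rho> m * B n"
            using r1 b1 \<rho>pos[of "n - j"] by (intro mult_mono) auto
          thus "\<bar>\<gamma> j * (\<rho> (n - j) * poly (phat (n - j)) y)\<bar> \<le> \<bar>\<gamma> j\<bar> * (\<rho> m * B n)"
            using \<rho>pos[of "n - j"] by (simp add: abs_mult mult_left_mono)
        qed
        also have "\<dots> = G * (\<rho> m * B n)" unfolding G_def by (simp add: sum_distrib_right)
        also have "\<dots> < \<rho> m * (real m + 2) * (B n + 1)"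
        proof -
          have "G * B n \<le> (real m + 2) * B n" using Gn nm B0[of n] by (intro mult_right_mono) auto
          also have "\<dots> < (real m + 2) * (B n + 1)" by (simp add: algebra_simps)
          finally have "G * B n < (real m + 2) * (B n + 1)" .
          hence "\<rho> m * (G * B n) < \<rho> m * ((real m + 2) * (B n + 1))" using \<rho>pos[of m] by simp
          thus ?thesis by (simp add: algebra_simps)
        qed
        also have "\<dots> \<le> \<rho> n * \<bar>poly (phat n) y\<bar>" using key[of y m] y nm by simp
        finally have "\<bar>E\<bar> < \<rho> n * \<bar>poly (phat n) y\<bar>" .
        from dominate_sign[OF this \<rho>pos] show ?thesis unfolding pq E_def .
      qed
      have roots: "\<exists>x. s - ee n < x \<and> x < s + ee n \<and> poly q x = 0" if s: "s \<in> SS n" for s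
      proof -
        have y1: "s - ee n \<in> Y n" and y2: "s + ee n \<in> Y n" using s unfolding Y_def by auto
        have "poly q (s - ee n) * poly q (s + ee n) < 0"
          by (rule sign_transfer[OF qg[OF y1] qg[OF y2] chg[OF s]])
        from poly_IVT[OF _ this] eP[of n] show ?thesis by auto
      qed
      then obtain rt where rt: "\<And>s. s \<in> SS n \<Longrightarrow> s - ee n < rt s \<and> rt s < s + ee n \<and> poly q (rt s) = 0"
        by metis
      have inj: "inj_on rt (SS n)"
      proof (rule inj_onI)
        fix s t assume s: "s \<in> SS n" and t: "t \<in> SS n" and eq: "rt s = rt t"
        show "s = t"
        proof (rule ccontr)
          assume "s \<noteq> t"
          hence "2 * ee n < \<bar>s - t\<bar>" using sep s t by blast
          moreover have "\<bar>s - t\<bar> < 2 * ee n" using rt[OF s] rt[OF t] eq by auto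
          ultimately show False by simp
        qed
      qed
      have cR: "card (rt ` SS n) = n" using card_image[OF inj] cS by simp
      have RS: "rt ` SS n \<subseteq> {x. poly q x = 0}" using rt by auto
      have q0: "q \<noteq> 0"
      proof
        assume "q = 0"
        have "SS n \<noteq> {}" using cS[of n] n1 by auto
        then obtain s where "s \<in> SS n" by blast
        from roots[OF this] have "\<exists>x. True" by blast
        have y1: "s - ee n \<in> Y n" using \<open>s \<in> SS n\<close> unfolding Y_def by auto
        show False using qg[OF y1] \<open>q = 0\<close> by simp
      qed
      have dq: "degree q \<le> n" unfolding q_def
      proof (rule degree_sum_le)
        fix j assume "j \<in> {..K}"
        have "degree (smult (\<gamma> j) (smult (\<rho> (n - j)) (phat (n - j)))) \<le> degree (phat (n - j))"
          by (metis degree_smult_le order.trans)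
        also have "\<dots> = n - j" using mop unfolding monic_orthogonal_polys_def by blast
        finally show "degree (smult (\<gamma> j) (smult (\<rho> (n - j)) (phat (n - j)))) \<le> n" by simp
      qed simp
      show "only_real_zeros (\<Sum>j\<le>K. smult (\<gamma> j) (smult (\<rho> (n - j)) (phat (n - j))))"
        using only_real_from_roots[OF q0 dq RS _ finite_imageI[OF fS]] cR unfolding q_def by simp
    qed
  qed
qed

end
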